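(* In the Min Sum Set Cover case (all box values in $\{0,\infty\}$), there is a scenario-independent rounding which, given any doubly stochastic $\overline{x}\in[0,1]^{n\times n}$, produces a random order of opening the boxes such that for every scenario $s$ the expected number of boxes opened until a box of value $0$ in $s$ is opened is at most $4\,\overline{g}^s(\overline{x})$; i.e. it is a $4$-approximation.
   Context: There are $n$ boxes $\mathcal{B}=\{1,\dots,n\}$ and time steps $\mathcal{T}=\{1,\dots,n\}$. A scenario $s$ is a vector $c^s\in\{0,\infty\}^n$ with at least one zero entry. For doubly stochastic $x$, $\overline{g}^s(x)=\min_{z\ge0}\sum_{i\in\mathcal{B},t\in\mathcal{T}}(t+c^s_i)z_{it}$ subject to $\sum_{i,t}z_{it}=1$ and $z_{it}\le x_{it}$ for all $i,t$ (with $z_{it}=0$ forced wherever $c^s_i=\infty$ in a finite solution). *)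

theory Defs
  imports "HOL-Probability.Probability"
begin

text \<open>Boxes and time steps are both indexed by {1..n}. A fractional solution is
  x :: nat => nat => real, with x i t the mass of box i at time t.\<close>

definition doubly_stochastic :: "nat \<Rightarrow> (nat \<Rightarrow> nat \<Rightarrow> real) \<Rightarrow> bool" where
  "doubly_stochastic n x \<longleftrightarrow>
     (\<forall>i\<in>{1..n}. \<forall>t\<in>{1..n}. 0 \<le> x i t) \<and>
     (\<forall>i\<in>{1..n}. (\<Sum>t\<in>{1..n}. x i t) = 1) \<and>
     (\<forall>t\<in>{1..n}. (\<Sum>i\<in>{1..n}. x i t) = 1)"

text \<open>A Min Sum Set Cover scenario is described by its set S of boxes of value 0
  (all other boxes have value infinity); S is nonempty. The LP value
  g^s(x) = min { sum_{i,t} (t + c_i) z_it : z >= 0, sum z = 1, z <= x }, where a finite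
  value forces z_it = 0 for boxes of infinite value.\<close>

definition gbar :: "nat \<Rightarrow> (nat \<Rightarrow> nat \<Rightarrow> real) \<Rightarrow> nat set \<Rightarrow> real" where
  "gbar n x S = Inf { (\<Sum>i\<in>{1..n}. \<Sum>t\<in>{1..n}. real t * z i t) | z.
       (\<forall>i\<in>{1..n}. \<forall>t\<in>{1..n}. 0 \<le> z i t \<and> z i t \<le> x i t) \<and>
       (\<Sum>i\<in>{1..n}. \<Sum>t\<in>{1..n}. z i t) = 1 \<and>
       (\<forall>i\<in>{1..n} - S. \<forall>t\<in>{1..n}. z i t = 0) }"

text \<open>An order of opening the boxes: \<sigma> permutes {1..n}, \<sigma> t is the box opened at
  time t. The number of boxes opened until a box of S is opened:\<close>

definition cover_time :: "nat \<Rightarrow> (nat \<Rightarrow> nat) \<Rightarrow> nat set \<Rightarrow> nat" where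
  "cover_time n \<sigma> S = Min {t\<in>{1..n}. \<sigma> t \<in> S}"

end

theory Submission
  imports Defs
begin


fun dd :: "'a list \<Rightarrow> 'a list" where
  "dd [] = []"
| "dd (x # xs) = x # dd (filter (\<lambda>y. y \<noteq> x) xs)"

lemma dd_set[simp]: "set (dd xs) = set xs"
  by (induction xs rule: dd.induct) auto

lemma dd_distinct: "distinct (dd xs)"
  by (induction xs rule: dd.induct) auto

lemma dd_length: "length (dd xs) \<le> length xs"
proof (induction xs rule: dd.induct)
  case 1 then show ?case by simp
next
  case (2 x xs)
  have "length (dd (filter (\<lambda>y. y \<noteq> x) xs)) \<le> length xs"
    using 2 length_filter_le[of _ xs] by (meson order.trans)
  then show ?case by simp
qed


lemma dd_append: "dd (xs @ ys) = dd xs @ dd (filter (\<lambda>y. y \<notin> set xs) ys)"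
proof (induction xs arbitrary: ys rule: dd.induct)
  case 1 then show ?case by simp
next
  case (2 x xs)
  have "dd ((x # xs) @ ys) = x # dd (filter (\<lambda>y. y \<noteq> x) xs @ filter (\<lambda>y. y \<noteq> x) ys)" by simp
  also have "\<dots> = x # dd (filter (\<lambda>y. y \<noteq> x) xs) @ dd (filter (\<lambda>y. y \<notin> set (filter (\<lambda>y. y \<noteq> x) xs)) (filter (\<lambda>y. y \<noteq> x) ys))"
    using 2 by simp
  also have "filter (\<lambda>y. y \<notin> set (filter (\<lambda>y. y \<noteq> x) xs)) (filter (\<lambda>y. y \<noteq> x) ys) = filter (\<lambda>y. y \<notin> set (x#xs)) ys"
    by (auto simp: filter_filter intro!: filter_cong)
  finally show ?case by simp
qed

definition mkp :: "nat \<Rightarrow> (nat \<Rightarrow> nat) \<Rightarrow> nat \<Rightarrow> nat" where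
  "mkp n b t = (if t \<in> {1..n} then dd (filter (\<lambda>i. i \<in> {1..n}) (map b [1..<n+1]) @ [1..<n+1]) ! (t - 1) else t)"

lemma mkp_permutes: "mkp n b permutes {1..n}"
proof -
  define L where "L = dd (filter (\<lambda>i. i \<in> {1..n}) (map b [1..<n+1]) @ [1..<n+1])"
  have dL: "distinct L" unfolding L_def by (rule dd_distinct)
  have sL: "set L = {1..n}" unfolding L_def by auto
  have lL: "length L = n" using distinct_card[OF dL] sL by simp
  have b1: "bij_betw ((!) L) {..<n} {1..n}" using bij_betw_nth[OF dL] lL sL by simp
  have b2: "bij_betw (\<lambda>t. t - 1) {1..n} {..<n}"
    by (rule bij_betwI[where g="\<lambda>t. t + 1"]) auto
  have "bij_betw ((!) L \<circ> (\<lambda>t. t - 1)) {1..n} {1..n}" using bij_betw_trans[OF b2 b1] .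
  then have "bij_betw (mkp n b) {1..n} {1..n}"
    by (rule bij_betw_cong[THEN iffD1, rotated]) (auto simp: mkp_def L_def)
  then show ?thesis by (rule bij_imp_permutes) (auto simp: mkp_def)
qed

lemma mkp_prefix:
  assumes "h \<in> {1..n}" "b h \<in> {1..n}"
  shows "\<exists>t\<in>{1..h}. mkp n b t = b h"
proof -
  define xs where "xs = filter (\<lambda>i. i \<in> {1..n}) (map b [1..<h+1])"
  define ys where "ys = filter (\<lambda>i. i \<in> {1..n}) (map b [h+1..<n+1]) @ [1..<n+1]"
  have "[1..<n+1] = [1..<h+1] @ [h+1..<n+1]" 
  proof -
    have e: "n + 1 = (h+1) + (n-h)" using assms by simp
    have "[1..<(h+1) + (n-h)] = [1..<h+1] @ [h+1..<(h+1) + (n-h)]" by (rule upt_add_eq_append) simp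
    then show ?thesis unfolding e[symmetric] .
  qed
  then have eq: "filter (\<lambda>i. i \<in> {1..n}) (map b [1..<n+1]) @ [1..<n+1] = xs @ ys"
    unfolding xs_def ys_def by simp
  have "length (dd xs) \<le> length xs" by (rule dd_length)
  also have "length xs \<le> length (map b [1..<h+1])" unfolding xs_def by (rule length_filter_le)
  also have "\<dots> = h" by simp
  finally have lx: "length (dd xs) \<le> h" .
  have "b h \<in> set (dd xs)" using assms unfolding xs_def by auto
  then obtain k where k: "k < length (dd xs)" "dd xs ! k = b h" using in_set_conv_nth[of "b h" "dd xs"] by blast
  have "mkp n b (k+1) = b h"
    using k lx assms unfolding mkp_def eq dd_append by (auto simp: nth_append)
  then show ?thesis using k lx by (intro bexI[of _ "k+1"]) auto
qed

lemma cover_le: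
  assumes "S \<subseteq> {1..n}" "S \<noteq> {}"
  shows "real (cover_time n (mkp n b) S) \<le> (\<Sum>m<n. indicator {b. \<forall>j\<in>{1..m}. b j \<notin> S} b)"
proof -
  let ?\<sigma> = "mkp n b"
  have perm: "?\<sigma> permutes {1..n}" by (rule mkp_permutes)
  have ne: "{t\<in>{1..n}. ?\<sigma> t \<in> S} \<noteq> {}"
  proof -
    obtain s where "s \<in> S" using assms by auto
    then have "s \<in> ?\<sigma> ` {1..n}" using permutes_image[OF perm] assms by auto
    then show ?thesis using \<open>s \<in> S\<close> by auto
  qed
  have fin: "finite {t\<in>{1..n}. ?\<sigma> t \<in> S}" by simp
  show ?thesis
  proof (cases "\<exists>h\<in>{1..n}. b h \<in> S")
    case True
    define h where "h = (LEAST h. h \<in> {1..n} \<and> b h \<in> S)"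
    have h: "h \<in> {1..n} \<and> b h \<in> S" unfolding h_def using True by (metis (mono_tags, lifting) LeastI)
    have hmin: "\<And>j. j \<in> {1..n} \<Longrightarrow> b j \<in> S \<Longrightarrow> h \<le> j" unfolding h_def by (simp add: Least_le)
    have hb: "b h \<in> {1..n}" using h assms(1) by auto
    obtain t where t: "t \<in> {1..h}" "?\<sigma> t = b h" using mkp_prefix[of h n b, OF conjunct1[OF h] hb] by (elim bexE)
    have "cover_time n ?\<sigma> S \<le> t" unfolding cover_time_def
      using t h by (intro Min_le) auto
    also have "t \<le> h" using t by auto
    finally have c: "real (cover_time n ?\<sigma> S) \<le> real h" by simp
    have one: "indicator {b. \<forall>j\<in>{1..m}. b j \<notin> S} b = (1::real)" if "m < h" for m
    proof -
      have "\<forall>j\<in>{1..m}. b j \<notin> S"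
      proof
        fix j assume j: "j \<in> {1..m}"
        show "b j \<notin> S"
        proof
          assume "b j \<in> S"
          moreover have "j \<in> {1..n}" using j that h by auto
          ultimately have "h \<le> j" using hmin by blast
          then show False using j that by auto
        qed
      qed
      then show ?thesis by (simp add: indicator_def)
    qed
    have "(\<Sum>m<h. indicator {b. \<forall>j\<in>{1..m}. b j \<notin> S} b) = (\<Sum>m<h. (1::real))"
      using one by (intro sum.cong) auto
    also have "\<dots> = real h" by simp
    finally have hs: "(\<Sum>m<h. indicator {b. \<forall>j\<in>{1..m}. b j \<notin> S} b) = real h" .
    have "(\<Sum>m<h. indicator {b. \<forall>j\<in>{1..m}. b j \<notin> S} b) \<le> (\<Sum>m<n. indicator {b. \<forall>j\<in>{1..m}. b j \<notin> S} b :: real)"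
      by (rule sum_mono2) (use h in auto)
    then show ?thesis using c hs by linarith
  next
    case False
    have "cover_time n ?\<sigma> S \<le> n" unfolding cover_time_def
      using Min_in[OF fin ne] by auto
    moreover have "(\<Sum>m<n. indicator {b. \<forall>j\<in>{1..m}. b j \<notin> S} b) = (\<Sum>m<n. (1::real))"
      using False by (intro sum.cong) (auto simp: indicator_def)
    ultimately show ?thesis by simp
  qed
qed



lemma cheb:
  fixes \<mu> A B :: "nat \<Rightarrow> real"
  assumes fin: "finite G" and mu0: "\<forall>g\<in>G. 0 \<le> \<mu> g" and mu1: "sum \<mu> G = 1"
    and mono: "\<forall>g\<in>G. \<forall>g'\<in>G. g \<le> g' \<longrightarrow> A g \<le> A g' \<and> B g \<le> B g'"
  shows "(\<Sum>g\<in>G. \<mu> g * A g) * (\<Sum>g\<in>G. \<mu> g * B g) \<le> (\<Sum>g\<in>G. \<mu> g * A g * B g)"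
proof -
  have t: "0 \<le> \<mu> g * \<mu> g' * ((A g - A g') * (B g - B g'))" if "g \<in> G" "g' \<in> G" for g g'
  proof -
    have "0 \<le> (A g - A g') * (B g - B g')"
    proof (cases "g \<le> g'")
      case True then show ?thesis using mono that by (intro mult_nonpos_nonpos) auto
    next
      case False then show ?thesis using mono that by (intro mult_nonneg_nonneg) auto
    qed
    then show ?thesis using mu0 that by simp
  qed
  define X where "X = (\<Sum>g\<in>G. \<mu> g * A g * B g)"
  define PA where "PA = (\<Sum>g\<in>G. \<mu> g * A g)"
  define PB where "PB = (\<Sum>g\<in>G. \<mu> g * B g)"
  have "0 \<le> (\<Sum>g\<in>G. \<Sum>g'\<in>G. \<mu> g * \<mu> g' * ((A g - A g') * (B g - B g')))"
    using t by (intro sum_nonneg) auto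
  also have "\<dots> = (\<Sum>g\<in>G. \<Sum>g'\<in>G. (\<mu> g * A g * B g) * \<mu> g' + (\<mu> g' * A g' * B g') * \<mu> g
        - (\<mu> g * A g) * (\<mu> g' * B g') - (\<mu> g' * A g') * (\<mu> g * B g))"
    by (intro sum.cong refl) (simp add: algebra_simps)
  also have "\<dots> = (\<Sum>g\<in>G. \<Sum>g'\<in>G. (\<mu> g * A g * B g) * \<mu> g') + (\<Sum>g\<in>G. \<Sum>g'\<in>G. (\<mu> g' * A g' * B g') * \<mu> g)
        - (\<Sum>g\<in>G. \<Sum>g'\<in>G. (\<mu> g * A g) * (\<mu> g' * B g')) - (\<Sum>g\<in>G. \<Sum>g'\<in>G. (\<mu> g' * A g') * (\<mu> g * B g))"
    by (simp add: sum.distrib sum_subtractf)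
  also have "(\<Sum>g\<in>G. \<Sum>g'\<in>G. (\<mu> g * A g * B g) * \<mu> g') = X"
    by (simp add: X_def sum_distrib_left[symmetric] mu1)
  also have "(\<Sum>g\<in>G. \<Sum>g'\<in>G. (\<mu> g' * A g' * B g') * \<mu> g) = X"
  proof -
    have "(\<Sum>g\<in>G. \<Sum>g'\<in>G. (\<mu> g' * A g' * B g') * \<mu> g) = (\<Sum>g\<in>G. X * \<mu> g)"
      by (simp add: X_def sum_distrib_right)
    also have "\<dots> = X" by (simp add: sum_distrib_left[symmetric] mu1)
    finally show ?thesis .
  qed
  also have "(\<Sum>g\<in>G. \<Sum>g'\<in>G. (\<mu> g * A g) * (\<mu> g' * B g')) = PA * PB"
    by (simp add: PA_def PB_def sum_product)
  also have "(\<Sum>g\<in>G. \<Sum>g'\<in>G. (\<mu> g' * A g') * (\<mu> g * B g)) = PA * PB"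
  proof -
    have "PA * PB = PB * PA" by simp
    also have "PB * PA = (\<Sum>g\<in>G. \<Sum>g'\<in>G. (\<mu> g * B g) * (\<mu> g' * A g'))"
      unfolding PA_def PB_def by (rule sum_product)
    finally show ?thesis by (simp add: mult.commute)
  qed
  finally show ?thesis unfolding X_def[symmetric] PA_def[symmetric] PB_def[symmetric] by linarith
qed

lemma prod_cheb:
  fixes \<mu> :: "nat \<Rightarrow> real" and F :: "nat \<Rightarrow> nat \<Rightarrow> real" and a :: "nat \<Rightarrow> real"
  assumes fin: "finite G" and mu0: "\<forall>g\<in>G. 0 \<le> \<mu> g" and mu1: "sum \<mu> G = 1"
    and F0: "\<forall>j g. 0 \<le> F j g"
    and Fmono: "\<forall>j. \<forall>g\<in>G. \<forall>g'\<in>G. g \<le> g' \<longrightarrow> F j g \<le> F j g'"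
  shows "(\<forall>j\<in>{1..m}. 0 \<le> a j \<and> a j \<le> (\<Sum>g\<in>G. \<mu> g * F j g)) \<Longrightarrow>
         (\<Prod>j\<in>{1..m}. a j) \<le> (\<Sum>g\<in>G. \<mu> g * (\<Prod>j\<in>{1..m}. F j g))"
proof (induction m)
  case 0
  then show ?case using mu1 by simp
next
  case (Suc m)
  have IH: "(\<Prod>j\<in>{1..m}. a j) \<le> (\<Sum>g\<in>G. \<mu> g * (\<Prod>j\<in>{1..m}. F j g))"
    using Suc by auto
  have as: "0 \<le> a (Suc m)" "a (Suc m) \<le> (\<Sum>g\<in>G. \<mu> g * F (Suc m) g)" using Suc.prems by auto
  have "(\<Prod>j\<in>{1..Suc m}. a j) = (\<Prod>j\<in>{1..m}. a j) * a (Suc m)"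
    by (simp add: prod.cl_ivl_Suc)
  also have "\<dots> \<le> (\<Sum>g\<in>G. \<mu> g * (\<Prod>j\<in>{1..m}. F j g)) * (\<Sum>g\<in>G. \<mu> g * F (Suc m) g)"
    using IH as Suc.prems by (intro mult_mono prod_nonneg sum_nonneg) (auto simp: mu0 F0 intro!: mult_nonneg_nonneg prod_nonneg)
  also have "\<dots> \<le> (\<Sum>g\<in>G. \<mu> g * (\<Prod>j\<in>{1..m}. F j g) * F (Suc m) g)"
  proof (rule cheb[OF fin mu0 mu1])
    show "\<forall>g\<in>G. \<forall>g'\<in>G. g \<le> g' \<longrightarrow> (\<Prod>j\<in>{1..m}. F j g) \<le> (\<Prod>j\<in>{1..m}. F j g') \<and> F (Suc m) g \<le> F (Suc m) g'"
      using Fmono F0 by (auto intro!: prod_mono)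
  qed
  also have "\<dots> = (\<Sum>g\<in>G. \<mu> g * (\<Prod>j\<in>{1..Suc m}. F j g))"
    by (simp add: prod.cl_ivl_Suc mult.assoc)
  finally show ?case .
qed

definition ww :: "nat \<Rightarrow> nat" where "ww j = (j + 1) div 2"
definition FF :: "nat \<Rightarrow> nat \<Rightarrow> real" where
  "FF j g = (if g \<le> ww j then 1 - 1 / real (ww j) else 1)"
definition PP :: "nat \<Rightarrow> nat \<Rightarrow> real" where "PP g m = (\<Prod>j\<in>{1..m}. FF j g)"

lemma FF_nonneg: "0 \<le> FF j g"
  by (cases "ww j = 0") (auto simp: FF_def field_simps)

lemma FF_mono: "g \<le> g' \<Longrightarrow> FF j g \<le> FF j g'"
  by (auto simp: FF_def)

lemma PP_Suc: "PP g (Suc m) = PP g m * FF (Suc m) g"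
  by (simp add: PP_def prod.cl_ivl_Suc)

lemma PP_nonneg: "0 \<le> PP g m"
  by (simp add: PP_def prod_nonneg FF_nonneg)

lemma PP_one: "m \<le> 2 * g - 2 \<Longrightarrow> PP g m = 1"
proof (induction m)
  case 0 then show ?case by (simp add: PP_def)
next
  case (Suc m)
  have "ww (Suc m) < g" using Suc.prems by (simp add: ww_def)
  then show ?case using Suc by (simp add: PP_Suc FF_def)
qed

lemma PP_main:
  assumes g: "g \<ge> 2"
  shows "PP g (2 * (g - 1 + d)) = (real (g - 1) / real (g - 1 + d))^2 \<and>
         (\<Sum>m<2 * (g - 1 + d) + 1. PP g m) + 2 * real (g - 1)^2 / real (g - 1 + d) \<le> 4 * real g - 3"
proof (induction d)
  case 0
  have "(\<Sum>m<2 * (g - 1) + 1. PP g m) = (\<Sum>m<2 * (g - 1) + 1. 1)"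
    by (intro sum.cong refl PP_one) auto
  then have s: "(\<Sum>m<2 * (g - 1) + 1. PP g m) = 2 * real g - 1" using g by simp
  have "2 * real (g - 1)^2 / real (g - 1) = 2 * real g - 2" using g
    by (simp add: power2_eq_square of_nat_diff)
  then show ?case using g s by (simp add: PP_one)
next
  case (Suc d)
  define k where "k = g - 1 + d"
  have k1: "k \<ge> 1" using g unfolding k_def by simp
  have e: "2 * (g - 1 + Suc d) = Suc (Suc (2 * k))" unfolding k_def by simp
  have w1: "ww (Suc (2 * k)) = k + 1" and w2: "ww (Suc (Suc (2 * k))) = k + 1"
    by (simp_all add: ww_def)
  have gk: "g \<le> k + 1" unfolding k_def using g by simp
  define a where "a = real (g - 1)^2"
  define K where "K = real k"
  have K1: "K \<ge> 1" using k1 unfolding K_def by simp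
  have a0: "a \<ge> 0" unfolding a_def by simp
  have P0: "PP g (2 * k) = a / K^2" using Suc.IH unfolding k_def[symmetric] a_def K_def
    by (simp add: power_divide)
  have Fv: "FF (Suc (2 * k)) g = K / (K + 1)" "FF (Suc (Suc (2 * k))) g = K / (K + 1)"
    using w1 w2 gk K1 unfolding FF_def K_def by (auto simp: field_simps)
  have P1: "PP g (Suc (2 * k)) = a / (K * (K + 1))"
  proof -
    have "PP g (Suc (2 * k)) = a / K^2 * (K / (K + 1))" unfolding PP_Suc P0 Fv ..
    also have "\<dots> = a / (K * (K + 1))" using K1 by (simp add: power2_eq_square)
    finally show ?thesis .
  qed
  have P2: "PP g (Suc (Suc (2 * k))) = a / (K + 1)^2"
  proof -
    have "PP g (Suc (Suc (2 * k))) = a / (K * (K + 1)) * (K / (K + 1))" unfolding PP_Suc[of g "Suc (2*k)"] P1 Fv ..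
    also have "\<dots> = a / (K + 1)^2" using K1 by (simp add: power2_eq_square)
    finally show ?thesis .
  qed
  have S: "(\<Sum>m<Suc (Suc (2 * k)) + 1. PP g m) = (\<Sum>m<2 * k + 1. PP g m) + a / (K * (K + 1)) + a / (K + 1)^2"
    using P1 P2 by simp
  have IHs: "(\<Sum>m<2 * k + 1. PP g m) + 2 * a / K \<le> 4 * real g - 3"
    using Suc.IH unfolding k_def[symmetric] a_def K_def by simp
  have key: "a / (K * (K + 1)) + a / (K + 1)^2 + 2 * a / (K + 1) \<le> 2 * a / K"
  proof -
    have "a / (K * (K + 1)) + a / (K + 1)^2 + 2 * a / (K + 1) = a * (1 / (K * (K + 1)) + 1 / (K + 1)^2 + 2 / (K + 1))"
      by (simp add: field_simps)
    also have "1 / (K * (K + 1)) + 1 / (K + 1)^2 + 2 / (K + 1) \<le> 2 / K"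
    proof -
      have "1 / (K * (K + 1)) + 1 / (K + 1)^2 + 2 / (K + 1) - 2 / K = - 1 / (K * (K + 1)^2)"
      proof -
        have a: "K \<noteq> 0" "K + 1 \<noteq> 0" using K1 by auto
        show ?thesis using a by (simp add: divide_simps power2_eq_square) (simp add: algebra_simps)
      qed
      also have "\<dots> \<le> 0" using K1 by simp
      finally show ?thesis by simp
    qed
    then have "a * (1 / (K * (K + 1)) + 1 / (K + 1)^2 + 2 / (K + 1)) \<le> a * (2 / K)"
      using a0 by (rule mult_left_mono) 
    finally show ?thesis by (simp add: mult.commute)
  qed
  have Kd: "real (g - 1 + Suc d) = K + 1" unfolding K_def k_def by simp
  have c1: "PP g (Suc (Suc (2 * k))) = (real (g - 1) / real (g - 1 + Suc d))^2"
    unfolding P2 Kd a_def power_divide ..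
  have t: "2 * real (g - 1)^2 / real (g - 1 + Suc d) = 2 * a / (K + 1)"
    unfolding Kd a_def ..
  have c2: "(\<Sum>m<Suc (Suc (2 * k)) + 1. PP g m) + 2 * real (g - 1)^2 / real (g - 1 + Suc d) \<le> 4 * real g - 3"
    unfolding t using S IHs key by linarith
  show ?case unfolding e using c1 c2 by simp
qed

lemma PP_sum:
  assumes "g \<ge> 1"
  shows "(\<Sum>m<n. PP g m) \<le> 4 * real g"
proof (cases "g = 1")
  case True
  have "PP 1 m = (if m = 0 then 1 else 0)" for m
  proof (cases m)
    case 0 then show ?thesis by (simp add: PP_def)
  next
    case (Suc m')
    have "PP 1 m = (\<Prod>j\<in>{1..m}. FF j 1)" by (simp add: PP_def)
    also have "\<dots> = 0" using Suc by (intro prod_zero bexI[of _ 1]) (auto simp: FF_def ww_def)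
    finally show ?thesis using Suc by simp
  qed
  then have "(\<Sum>m<n. PP 1 m) \<le> (\<Sum>m<n. if m = 0 then 1 else 0)" by simp
  also have "\<dots> \<le> 1" by (cases n) (simp_all add: sum.If_cases)
  finally show ?thesis using True by simp
next
  case False
  then have g: "g \<ge> 2" using assms by simp
  define d where "d = n"
  have "(\<Sum>m<n. PP g m) \<le> (\<Sum>m<2 * (g - 1 + d) + 1. PP g m)"
    by (rule sum_mono2) (auto simp: d_def PP_nonneg)
  also have "\<dots> \<le> 4 * real g - 3 - 2 * real (g - 1)^2 / real (g - 1 + d)"
    using PP_main[OF g, of d] by linarith
  also have "\<dots> \<le> 4 * real g"
  proof -
    have "0 \<le> 2 * real (g - 1)^2 / real (g - 1 + d)" by simp
    then show ?thesis by linarith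
  qed
  finally show ?thesis .
qed



lemma telescope: "(\<Sum>g\<in>{1..s}. (f g - f (g - 1))) = f s - f (0::nat)" for f :: "nat \<Rightarrow> real"
  by (induction s) (simp_all add: sum.cl_ivl_Suc)

lemma abel: "(\<Sum>t\<in>{1..n}. real t * f t) = (\<Sum>s<n. (\<Sum>t\<in>{1..n}. f t) - (\<Sum>t\<in>{1..s}. f t))"
  for f :: "nat \<Rightarrow> real"
proof (induction n)
  case 0 then show ?case by simp
next
  case (Suc n)
  have "(\<Sum>s<Suc n. (\<Sum>t\<in>{1..Suc n}. f t) - (\<Sum>t\<in>{1..s}. f t))
      = (\<Sum>s<Suc n. ((\<Sum>t\<in>{1..n}. f t) - (\<Sum>t\<in>{1..s}. f t)) + f (Suc n))"
    by (intro sum.cong refl) (simp add: sum.cl_ivl_Suc)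
  also have "\<dots> = (\<Sum>s<Suc n. (\<Sum>t\<in>{1..n}. f t) - (\<Sum>t\<in>{1..s}. f t)) + real (Suc n) * f (Suc n)"
    by (simp add: sum.distrib)
  also have "(\<Sum>s<Suc n. (\<Sum>t\<in>{1..n}. f t) - (\<Sum>t\<in>{1..s}. f t)) = (\<Sum>s<n. (\<Sum>t\<in>{1..n}. f t) - (\<Sum>t\<in>{1..s}. f t))"
    by simp
  finally show ?case using Suc by (simp add: sum.cl_ivl_Suc)
qed

lemma gbar_lb:
  assumes ds: "doubly_stochastic n x" and S: "S \<subseteq> {1..n}" "S \<noteq> {}"
  shows "(\<Sum>s<n. 1 - min (\<Sum>t\<in>{1..s}. \<Sum>i\<in>S. x i t) 1) \<le> gbar n x S"
proof -
  have x0: "\<And>i t. i \<in> {1..n} \<Longrightarrow> t \<in> {1..n} \<Longrightarrow> 0 \<le> x i t"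
    and rows: "\<And>i. i \<in> {1..n} \<Longrightarrow> (\<Sum>t\<in>{1..n}. x i t) = 1"
    using ds unfolding doubly_stochastic_def by auto
  have finS: "finite S" using S finite_subset by blast
  have cS: "card S \<ge> 1" using S finS by (simp add: Suc_le_eq card_gt_0_iff)
  define Z where "Z = {(\<Sum>i\<in>{1..n}. \<Sum>t\<in>{1..n}. real t * z i t) | z.
       (\<forall>i\<in>{1..n}. \<forall>t\<in>{1..n}. 0 \<le> z i t \<and> z i t \<le> x i t) \<and>
       (\<Sum>i\<in>{1..n}. \<Sum>t\<in>{1..n}. z i t) = 1 \<and>
       (\<forall>i\<in>{1..n} - S. \<forall>t\<in>{1..n}. z i t = 0)}"
  have ne: "Z \<noteq> {}"
  proof -
    define z0 where "z0 i t = (if i \<in> S then x i t / real (card S) else 0)" for i t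
    have "(\<Sum>i\<in>{1..n}. \<Sum>t\<in>{1..n}. z0 i t) = (\<Sum>i\<in>S. \<Sum>t\<in>{1..n}. z0 i t)"
      using S by (intro sum.mono_neutral_right) (auto simp: z0_def)
    also have "\<dots> = (\<Sum>i\<in>S. 1 / real (card S))"
      using S rows by (intro sum.cong refl) (auto simp: z0_def sum_divide_distrib[symmetric])
    also have "\<dots> = 1" using cS by simp
    finally have s1: "(\<Sum>i\<in>{1..n}. \<Sum>t\<in>{1..n}. z0 i t) = 1" .
    have "\<forall>i\<in>{1..n}. \<forall>t\<in>{1..n}. 0 \<le> z0 i t \<and> z0 i t \<le> x i t"
    proof (intro ballI)
      fix i t assume it: "i \<in> {1..n}" "t \<in> {1..n}"
      have "x i t / real (card S) \<le> x i t / 1"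
        using x0[OF it] cS by (intro divide_left_mono) auto
      then have "x i t / real (card S) \<le> x i t" by simp
      then show "0 \<le> z0 i t \<and> z0 i t \<le> x i t" using x0[OF it] by (auto simp: z0_def)
    qed
    then have "(\<Sum>i\<in>{1..n}. \<Sum>t\<in>{1..n}. real t * z0 i t) \<in> Z"
      unfolding Z_def using s1 by (auto simp: z0_def)
    then show ?thesis by blast
  qed
  have lb: "(\<Sum>s<n. 1 - min (\<Sum>t\<in>{1..s}. \<Sum>i\<in>S. x i t) 1) \<le> v" if "v \<in> Z" for v
  proof -
    obtain z where v: "v = (\<Sum>i\<in>{1..n}. \<Sum>t\<in>{1..n}. real t * z i t)"
      and zx: "\<forall>i\<in>{1..n}. \<forall>t\<in>{1..n}. 0 \<le> z i t \<and> z i t \<le> x i t"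
      and z1: "(\<Sum>i\<in>{1..n}. \<Sum>t\<in>{1..n}. z i t) = 1"
      and zS: "\<forall>i\<in>{1..n} - S. \<forall>t\<in>{1..n}. z i t = 0"
      using \<open>v \<in> Z\<close> unfolding Z_def by blast
    define c where "c t = (\<Sum>i\<in>{1..n}. z i t)" for t
    have v2: "v = (\<Sum>t\<in>{1..n}. real t * c t)"
      unfolding v c_def by (subst sum.swap) (simp add: sum_distrib_left)
    have c1: "(\<Sum>t\<in>{1..n}. c t) = 1" unfolding c_def using z1 by (subst sum.swap) simp
    have c0: "\<And>t. t \<in> {1..n} \<Longrightarrow> 0 \<le> c t" unfolding c_def using zx by (auto intro!: sum_nonneg)
    have cy: "c t \<le> (\<Sum>i\<in>S. x i t)" if "t \<in> {1..n}" for t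
    proof -
      have "c t = (\<Sum>i\<in>S. z i t)" unfolding c_def
        using S zS that by (intro sum.mono_neutral_right) auto
      also have "\<dots> \<le> (\<Sum>i\<in>S. x i t)" using zx S that by (intro sum_mono) auto
      finally show ?thesis .
    qed
    have "v = (\<Sum>s<n. 1 - (\<Sum>t\<in>{1..s}. c t))" unfolding v2 abel c1 ..
    moreover have "(\<Sum>s<n. 1 - min (\<Sum>t\<in>{1..s}. \<Sum>i\<in>S. x i t) 1) \<le> (\<Sum>s<n. 1 - (\<Sum>t\<in>{1..s}. c t))"
    proof (intro sum_mono)
      fix s assume s: "s \<in> {..<n}"
      have a: "(\<Sum>t\<in>{1..s}. c t) \<le> (\<Sum>t\<in>{1..s}. \<Sum>i\<in>S. x i t)"
        using s by (intro sum_mono cy) auto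
      have b: "(\<Sum>t\<in>{1..s}. c t) \<le> (\<Sum>t\<in>{1..n}. c t)"
        using s c0 by (intro sum_mono2) auto
      show "1 - min (\<Sum>t\<in>{1..s}. \<Sum>i\<in>S. x i t) 1 \<le> 1 - (\<Sum>t\<in>{1..s}. c t)"
        using a b c1 by linarith
    qed
    ultimately show ?thesis by simp
  qed
  show ?thesis unfolding gbar_def Z_def[symmetric] using ne lb by (intro cInf_greatest) auto
qed



theorem corollaryC3:
  fixes n :: nat and x :: "nat \<Rightarrow> nat \<Rightarrow> real"
  assumes "doubly_stochastic n x"
  shows "\<exists>p :: (nat \<Rightarrow> nat) pmf.
           set_pmf p \<subseteq> {\<sigma>. \<sigma> permutes {1..n}} \<and>
           (\<forall>S. S \<subseteq> {1..n} \<and> S \<noteq> {} \<longrightarrow>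
              measure_pmf.expectation p (\<lambda>\<sigma>. real (cover_time n \<sigma> S)) \<le> 4 * gbar n x S)"
proof -
  note ds = assms
  have x0: "\<And>i t. i \<in> {1..n} \<Longrightarrow> t \<in> {1..n} \<Longrightarrow> 0 \<le> x i t"
    and cols: "\<And>t. t \<in> {1..n} \<Longrightarrow> (\<Sum>i\<in>{1..n}. x i t) = 1"
    and rows: "\<And>i. i \<in> {1..n} \<Longrightarrow> (\<Sum>t\<in>{1..n}. x i t) = 1"
    using ds unfolding doubly_stochastic_def by auto
  define qq where "qq j i = (\<Sum>t\<in>{1..ww j}. x i t) / real (ww j)" for j i
  define q where "q j = pmf_of_list (map (\<lambda>i. (i, qq j i)) [1..<n+1])" for j
  define B where "B = Pi_pmf {1..n} 0 q"
  define p where "p = map_pmf (mkp n) B"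
  have wwn: "ww j \<in> {1..n}" if "j \<in> {1..n}" for j using that by (auto simp: ww_def)
  have wf: "pmf_of_list_wf (map (\<lambda>i. (i, qq j i)) [1..<n+1])" if j: "j \<in> {1..n}" for j
  proof (rule pmf_of_list_wfI)
    show "0 \<le> y" if "y \<in> set (map snd (map (\<lambda>i. (i, qq j i)) [1..<n+1]))" for y
      using that wwn[OF j] x0 unfolding qq_def by (auto intro!: divide_nonneg_nonneg sum_nonneg)
    have "sum_list (map snd (map (\<lambda>i. (i, qq j i)) [1..<n+1])) = sum_list (map (qq j) [1..<n+1])"
      by (simp add: o_def)
    also have "\<dots> = sum (qq j) (set [1..<n+1])" by (rule sum_list_distinct_conv_sum_set) simp
    also have "set [1..<n+1] = {1..n}" by auto
    also have "(\<Sum>i\<in>{1..n}. qq j i) = (\<Sum>t\<in>{1..ww j}. \<Sum>i\<in>{1..n}. x i t) / real (ww j)"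
      unfolding qq_def sum_divide_distrib[symmetric] by (subst sum.swap) (rule refl)
    also have "\<dots> = (\<Sum>t\<in>{1..ww j}. 1) / real (ww j)"
      using wwn[OF j] cols by (intro arg_cong2[where f="(/)"] sum.cong refl) auto
    also have "\<dots> = 1" using wwn[OF j] by simp
    finally show "sum_list (map snd (map (\<lambda>i. (i, qq j i)) [1..<n+1])) = 1" .
  qed
  have finB: "finite (set_pmf B)"
    unfolding B_def set_Pi_pmf[OF finite_atLeastAtMost]
    using wf by (intro finite_PiE_dflt) (auto simp: q_def finite_set_pmf_of_list)
  have intB: "integrable (measure_pmf B) f" for f :: "(nat \<Rightarrow> nat) \<Rightarrow> real"
    using finB by (rule integrable_measure_pmf_finite)
  show ?thesis
  proof (intro exI[of _ p] conjI allI impI)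
    show "set_pmf p \<subseteq> {\<sigma>. \<sigma> permutes {1..n}}"
      using mkp_permutes by (auto simp: p_def)
    fix S assume S: "S \<subseteq> {1..n} \<and> S \<noteq> {}"
    have finS: "finite S" using S finite_subset by blast
    define Y where "Y s = (\<Sum>t\<in>{1..s}. \<Sum>i\<in>S. x i t)" for s
    define M where "M s = min (Y s) 1" for s
    define \<mu> where "\<mu> g = M g - M (g - 1)" for g
    define E where "E m = {b. \<forall>j\<in>{1..m}. b j \<notin> S}" for m :: nat
    have Ysuc: "Y (Suc s) = Y s + (\<Sum>i\<in>S. x i (Suc s))" for s
      unfolding Y_def by (simp add: sum.cl_ivl_Suc)
    have mu0: "\<forall>g\<in>{1..n}. 0 \<le> \<mu> g"
    proof
      fix g assume g: "g \<in> {1..n}"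
      then obtain s where s: "g = Suc s" by (cases g) auto
      have "0 \<le> (\<Sum>i\<in>S. x i (Suc s))" using S g s x0 by (intro sum_nonneg) auto
      then show "0 \<le> \<mu> g" unfolding \<mu>_def M_def s using Ysuc[of s] by simp
    qed
    have Yn: "Y n = real (card S)"
    proof -
      have "Y n = (\<Sum>i\<in>S. \<Sum>t\<in>{1..n}. x i t)" unfolding Y_def by (rule sum.swap)
      also have "\<dots> = (\<Sum>i\<in>S. 1)" using S rows by (intro sum.cong) auto
      finally show ?thesis by simp
    qed
    have Mn: "M n = 1" using Yn S finS unfolding M_def by (simp add: card_gt_0_iff Suc_le_eq)
    have M0: "M 0 = 0" unfolding M_def Y_def by simp
    have summu: "(\<Sum>g\<in>{1..s}. \<mu> g) = M s" for s
      unfolding \<mu>_def using telescope[of M s] M0 by simp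
    have mu1: "sum \<mu> {1..n} = 1" using summu Mn by simp
    have probq: "measure_pmf.prob (q j) S = Y (ww j) / real (ww j)" if j: "j \<in> {1..n}" for j
    proof -
      have "measure_pmf.prob (q j) S = sum_list (map (qq j) (filter (\<lambda>i. i \<in> S) [1..<n+1]))"
        unfolding q_def measure_pmf_of_list[OF wf[OF j]] by (simp add: filter_map o_def)
      also have "\<dots> = (\<Sum>i\<in>S. qq j i)"
      proof -
        have "set (filter (\<lambda>i. i \<in> S) [1..<n+1]) = S" using S by auto
        then show ?thesis by (subst sum_list_distinct_conv_sum_set) auto
      qed
      also have "\<dots> = Y (ww j) / real (ww j)"
        unfolding qq_def Y_def sum_divide_distrib[symmetric] by (subst sum.swap) (rule refl)
      finally show ?thesis .
    qed
    have muF: "(\<Sum>g\<in>{1..n}. \<mu> g * FF j g) = 1 - M (ww j) / real (ww j)" if j: "j \<in> {1..n}" for j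
    proof -
      have "(\<Sum>g\<in>{1..n}. \<mu> g * FF j g) = (\<Sum>g\<in>{1..n}. \<mu> g - (if g \<in> {1..ww j} then \<mu> g / real (ww j) else 0))"
        by (intro sum.cong refl) (auto simp: FF_def algebra_simps)
      also have "\<dots> = 1 - (\<Sum>g\<in>{1..n} \<inter> {1..ww j}. \<mu> g / real (ww j))"
        by (simp only: sum_subtractf sum.inter_restrict[OF finite_atLeastAtMost] mu1)
      also have "{1..n} \<inter> {1..ww j} = {1..ww j}" using wwn[OF j] by auto
      also have "(\<Sum>g\<in>{1..ww j}. \<mu> g / real (ww j)) = M (ww j) / real (ww j)"
        unfolding sum_divide_distrib[symmetric] summu ..
      finally show ?thesis .
    qed
    have aj: "0 \<le> 1 - measure_pmf.prob (q j) S \<and> 1 - measure_pmf.prob (q j) S \<le> (\<Sum>g\<in>{1..n}. \<mu> g * FF j g)"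
      if j: "j \<in> {1..n}" for j
    proof
      show "0 \<le> 1 - measure_pmf.prob (q j) S" by simp
      have "M (ww j) / real (ww j) \<le> Y (ww j) / real (ww j)"
        unfolding M_def by (intro divide_right_mono) auto
      then show "1 - measure_pmf.prob (q j) S \<le> (\<Sum>g\<in>{1..n}. \<mu> g * FF j g)"
        using probq[OF j] muF[OF j] by simp
    qed
    have probE: "measure_pmf.prob B (E m) = (\<Prod>j\<in>{1..m}. 1 - measure_pmf.prob (q j) S)" if m: "m < n" for m
    proof -
      have "E m = Pi {1..n} (\<lambda>j. if j \<le> m then - S else UNIV)"
        using m unfolding E_def by (auto simp: Pi_def)
      then have "measure_pmf.prob B (E m) = (\<Prod>j\<in>{1..n}. measure_pmf.prob (q j) (if j \<le> m then - S else UNIV))"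
        unfolding B_def by (simp add: measure_Pi_pmf_Pi)
      also have "\<dots> = (\<Prod>j\<in>{1..n}. if j \<in> {..m} then 1 - measure_pmf.prob (q j) S else 1)"
      proof (intro prod.cong refl)
        fix j
        have "measure_pmf.prob (q j) (- S) = 1 - measure_pmf.prob (q j) S"
          using measure_pmf.prob_compl[of S "q j"] by (simp add: Compl_eq_Diff_UNIV)
        then show "measure_pmf.prob (q j) (if j \<le> m then - S else UNIV) = (if j \<in> {..m} then 1 - measure_pmf.prob (q j) S else 1)"
          by simp
      qed
      also have "\<dots> = (\<Prod>j\<in>{1..n} \<inter> {..m}. 1 - measure_pmf.prob (q j) S)"
        by (simp only: prod.inter_restrict[OF finite_atLeastAtMost])
      also have "{1..n} \<inter> {..m} = {1..m}" using m by auto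
      finally show ?thesis .
    qed
    have "measure_pmf.expectation p (\<lambda>\<sigma>. real (cover_time n \<sigma> S))
        = measure_pmf.expectation B (\<lambda>b. real (cover_time n (mkp n b) S))"
      by (simp add: p_def)
    also have "\<dots> \<le> measure_pmf.expectation B (\<lambda>b. \<Sum>m<n. indicator (E m) b)"
      using S unfolding E_def by (intro integral_mono intB cover_le) auto
    also have "\<dots> = (\<Sum>m<n. measure_pmf.expectation B (indicator (E m)))"
      by (rule Bochner_Integration.integral_sum) (rule intB)
    also have "\<dots> = (\<Sum>m<n. measure_pmf.prob B (E m))"
      by simp
    also have "\<dots> = (\<Sum>m<n. \<Prod>j\<in>{1..m}. 1 - measure_pmf.prob (q j) S)"
      using probE by (intro sum.cong refl) auto
    also have "\<dots> \<le> (\<Sum>m<n. \<Sum>g\<in>{1..n}. \<mu> g * PP g m)"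
    proof (intro sum_mono)
      fix m assume m: "m \<in> {..<n}"
      have "(\<Prod>j\<in>{1..m}. 1 - measure_pmf.prob (q j) S) \<le> (\<Sum>g\<in>{1..n}. \<mu> g * (\<Prod>j\<in>{1..m}. FF j g))"
        using m aj by (intro prod_cheb[OF finite_atLeastAtMost mu0 mu1]) (auto simp: FF_nonneg FF_mono)
      then show "(\<Prod>j\<in>{1..m}. 1 - measure_pmf.prob (q j) S) \<le> (\<Sum>g\<in>{1..n}. \<mu> g * PP g m)"
        by (simp add: PP_def)
    qed
    also have "\<dots> = (\<Sum>g\<in>{1..n}. \<mu> g * (\<Sum>m<n. PP g m))"
      by (subst sum.swap) (simp add: sum_distrib_left)
    also have "\<dots> \<le> (\<Sum>g\<in>{1..n}. \<mu> g * (4 * real g))"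
      using mu0 by (intro sum_mono mult_left_mono PP_sum) auto
    also have "\<dots> = 4 * (\<Sum>g\<in>{1..n}. real g * \<mu> g)"
      by (simp add: sum_distrib_left algebra_simps)
    also have "(\<Sum>g\<in>{1..n}. real g * \<mu> g) = (\<Sum>s<n. 1 - M s)"
      unfolding abel summu Mn ..
    also have "(\<Sum>s<n. 1 - M s) \<le> gbar n x S"
      using gbar_lb[OF ds] S unfolding M_def Y_def by auto
    finally show "measure_pmf.expectation p (\<lambda>\<sigma>. real (cover_time n \<sigma> S)) \<le> 4 * gbar n x S"
      by simp
  qed
qed

end
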